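(* With $S$ and $T$ as in the context, $p_S\ge p_T/2$.
   Context: Barycentric subdivisions: $T_0$ is an equilateral triangle with vertices $v_0,v_1,v_2$. $T_n$ is obtained by subdividing every triangular face $\{x,y,z\}$ of $T_{n-1}$ into the six triangles $\{x,m_{xy},c\},\{m_{xy},y,c\},\{y,m_{yz},c\},\{m_{yz},z,c\},\{z,m_{zx},c\},\{m_{zx},x,c\}$, where $m_{uv}$ are side midpoints and $c$ is the barycenter. As a simple graph, $T_n$ has the vertices of this triangulation and the sides of its faces as edges. Non-p.c.f. Sierpinski gasket: $S_0=T_0$. $S_n$ is obtained from $S_{n-1}$ by replacing each triangle $\{x,y,z\}$ of $S_{n-1}$, with its own three edges, by new vertices $m_{xy},m_{yz},m_{zx},c$ private to that triangle and the same six triangles, each carrying its own three edges. Thus distinct triangles have disjoint edge sets. $S$ and $T$ denote the limits. Bond percolation with parameter $p$: each edge receives an i.i.d. uniform $[0,1]$ label and is open if the label is $<p$. For $G\in\{S,T\}$ with approximations $G_n$, $p_G=\sup\{p\in[0,1]:\mathbb{P}_p(\text{there is an open path from } v_0 \text{ to } v_1 \text{ in } G_n)\to0 \text{ as } n\to\infty\}$. *)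

theory Defs
  imports "HOL-Analysis.Analysis" "HOL-Probability.Product_PMF"
begin

text \<open>Triangles are ordered triples of corners. A triangle at level n is addressed by a list
  of n choices in {0..5}; the head of the list is the most recent subdivision choice.\<close>

definition piece :: "nat \<Rightarrow> 'v \<Rightarrow> 'v \<Rightarrow> 'v \<Rightarrow> 'v \<Rightarrow> 'v \<Rightarrow> 'v \<Rightarrow> 'v \<Rightarrow> 'v \<times> 'v \<times> 'v" where
  "piece i x y z mxy myz mzx c =
     (if i = 0 then (x, mxy, c) else if i = 1 then (mxy, y, c)
      else if i = 2 then (y, myz, c) else if i = 3 then (myz, z, c)
      else if i = 4 then (z, mzx, c) else (mzx, x, c))"

definition addrs :: "nat \<Rightarrow> nat list set" where
  "addrs n = {a. length a = n \<and> (\<forall>i\<in>set a. i < 6)}"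

definition sides :: "'v \<times> 'v \<times> 'v \<Rightarrow> ('v \<times> 'v) set" where
  "sides t = (case t of (x, y, z) \<Rightarrow> {(x, y), (y, z), (z, x)})"

definition side :: "'v \<times> 'v \<times> 'v \<Rightarrow> nat \<Rightarrow> 'v \<times> 'v" where
  "side t j = (case t of (x, y, z) \<Rightarrow> (if j = 0 then (x, y) else if j = 1 then (y, z) else (z, x)))"

definition tv0 :: complex where "tv0 = 0"
definition tv1 :: complex where "tv1 = 1"
definition tv2 :: complex where "tv2 = Complex (1/2) (sqrt 3 / 2)"

fun Tcorners :: "nat list \<Rightarrow> complex \<times> complex \<times> complex" where
  "Tcorners [] = (tv0, tv1, tv2)"
| "Tcorners (i # a) = (case Tcorners a of (x, y, z) \<Rightarrow>
      piece i x y z ((x + y) / 2) ((y + z) / 2) ((z + x) / 2) ((x + y + z) / 3))"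

definition TE :: "nat \<Rightarrow> complex set set" where
  "TE n = {{u, v} | u v a. a \<in> addrs n \<and> (u, v) \<in> sides (Tcorners a)}"

text \<open>Vertices: (a,k) with k in {0,1,2} for a = [] are v0,v1,v2; (a,3..6) are the new private
  vertices m_xy, m_yz, m_zx, c created when subdividing the triangle with address a.\<close>
type_synonym svert = "nat list \<times> nat"

fun Scorners :: "nat list \<Rightarrow> svert \<times> svert \<times> svert" where
  "Scorners [] = (([], 0), ([], 1), ([], 2))"
| "Scorners (i # a) = (case Scorners a of (x, y, z) \<Rightarrow>
      piece i x y z (a, 3) (a, 4) (a, 5) (a, 6))"

text \<open>Edges of S_n: each triangle carries its own three edges (so parallel edges may occur).\<close>
definition SE :: "nat \<Rightarrow> (nat list \<times> nat) set" where
  "SE n = addrs n \<times> {0, 1, 2}"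

definition Sends :: "nat list \<times> nat \<Rightarrow> svert \<times> svert" where
  "Sends e = side (Scorners (fst e)) (snd e)"

definition perc :: "'e set \<Rightarrow> real \<Rightarrow> ('e \<Rightarrow> bool) pmf" where
  "perc E p = Pi_pmf E False (\<lambda>_. bernoulli_pmf p)"

definition T_cross :: "nat \<Rightarrow> real \<Rightarrow> real" where
  "T_cross n p = measure_pmf.prob (perc (TE n) p)
     {\<omega>. (tv0, tv1) \<in> {(u, v). {u, v} \<in> TE n \<and> \<omega> {u, v}}\<^sup>*}"

definition S_cross :: "nat \<Rightarrow> real \<Rightarrow> real" where
  "S_cross n p = measure_pmf.prob (perc (SE n) p)
     {\<omega>. (([], 0), ([], 1)) \<in>
          {(u, v). \<exists>e\<in>SE n. \<omega> e \<and> (Sends e = (u, v) \<or> Sends e = (v, u))}\<^sup>*}"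

definition p_T :: real where
  "p_T = Sup {p \<in> {0..1}. (\<lambda>n. T_cross n p) \<longlonglongrightarrow> 0}"

definition p_S :: real where
  "p_S = Sup {p \<in> {0..1}. (\<lambda>n. S_cross n p) \<longlonglongrightarrow> 0}"

end

theory Submission
  imports Defs
begin


definition cr :: "complex \<Rightarrow> complex \<Rightarrow> real" where
  "cr u v = Re u * Im v - Im u * Re v"

definition ND :: "complex \<times> complex \<times> complex \<Rightarrow> bool" where
  "ND t = (case t of (x,y,z) \<Rightarrow> cr (y - x) (z - x) \<noteq> 0)"

definition insd :: "complex \<times> complex \<times> complex \<Rightarrow> complex \<Rightarrow> bool" where
  "insd t P = (case t of (x,y,z) \<Rightarrow> \<exists>\<alpha> \<beta> \<gamma>::real. \<alpha> > 0 \<and> \<beta> > 0 \<and> \<gamma> > 0 \<and> \<alpha> + \<beta> + \<gamma> = 1 \<and>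
      P = of_real \<alpha> * x + of_real \<beta> * y + of_real \<gamma> * z)"

definition tchild :: "nat \<Rightarrow> complex \<times> complex \<times> complex \<Rightarrow> complex \<times> complex \<times> complex" where
  "tchild i t = (case t of (x,y,z) \<Rightarrow> piece i x y z ((x + y) / 2) ((y + z) / 2) ((z + x) / 2) ((x + y + z) / 3))"

lemma Tcorners_Cons: "Tcorners (i # a) = tchild i (Tcorners a)"
  by (simp add: tchild_def split: prod.splits)

declare Tcorners.simps(2)[simp del]

definition ordc :: "nat \<Rightarrow> real \<Rightarrow> real \<Rightarrow> real \<Rightarrow> bool" where
  "ordc i a b c = (if i = 0 then a > b \<and> b > c else if i = 1 then b > a \<and> a > c
     else if i = 2 then b > c \<and> c > a else if i = 3 then c > b \<and> b > a
     else if i = 4 then c > a \<and> a > b else a > c \<and> c > b)"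

lemma ND_child: assumes "ND t" shows "ND (tchild i t)"
proof -
  obtain x y z where t: "t = (x,y,z)" by (cases t) auto
  have D: "cr (y - x) (z - x) \<noteq> 0" using assms t by (simp add: ND_def)
  show ?thesis using D unfolding t tchild_def piece_def ND_def cr_def
    by (auto simp: field_simps)
qed

definition bary :: "complex \<times> complex \<times> complex \<Rightarrow> complex \<Rightarrow> real \<Rightarrow> real \<Rightarrow> real \<Rightarrow> bool" where
  "bary t P a b c = (case t of (x,y,z) \<Rightarrow> a > 0 \<and> b > 0 \<and> c > 0 \<and> a + b + c = 1 \<and>
      P = of_real a * x + of_real b * y + of_real c * z)"

lemma insd_bary: "insd t P \<longleftrightarrow> (\<exists>a b c. bary t P a b c)"
  by (cases t) (auto simp: insd_def bary_def)

lemma child_bary: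
  assumes "insd (tchild i (x,y,z)) P"
  shows "\<exists>a b c. bary (x,y,z) P a b c \<and> ordc i a b c"
proof -
  obtain a b g where h: "a > 0" "b > 0" "g > 0" "a + b + g = 1"
    and P: "P = of_real a * fst (tchild i (x,y,z)) + of_real b * fst (snd (tchild i (x,y,z)))
                + of_real g * snd (snd (tchild i (x,y,z)))"
    using assms by (cases "tchild i (x,y,z)") (auto simp: insd_def)
  consider "i = 0" | "i = 1" | "i = 2" | "i = 3" | "i = 4" | "i \<ge> 5" by linarith
  then show ?thesis
  proof cases
    case 1
    show ?thesis
      apply (rule exI[of _ "a + b/2 + g/3"], rule exI[of _ "b/2 + g/3"], rule exI[of _ "g/3"])
      using h 1 by (auto simp: bary_def ordc_def tchild_def piece_def P field_simps)
  next
    case 2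
    show ?thesis
      apply (rule exI[of _ "a/2 + g/3"], rule exI[of _ "a/2 + b + g/3"], rule exI[of _ "g/3"])
      using h 2 by (auto simp: bary_def ordc_def tchild_def piece_def P field_simps)
  next
    case 3
    show ?thesis
      apply (rule exI[of _ "g/3"], rule exI[of _ "a + b/2 + g/3"], rule exI[of _ "b/2 + g/3"])
      using h 3 by (auto simp: bary_def ordc_def tchild_def piece_def P field_simps)
  next
    case 4
    show ?thesis
      apply (rule exI[of _ "g/3"], rule exI[of _ "a/2 + g/3"], rule exI[of _ "a/2 + b + g/3"])
      using h 4 by (auto simp: bary_def ordc_def tchild_def piece_def P field_simps)
  next
    case 5
    show ?thesis
      apply (rule exI[of _ "b/2 + g/3"], rule exI[of _ "g/3"], rule exI[of _ "a + b/2 + g/3"])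
      using h 5 by (auto simp: bary_def ordc_def tchild_def piece_def P field_simps)
  next
    case 6
    show ?thesis
      apply (rule exI[of _ "a/2 + b + g/3"], rule exI[of _ "g/3"], rule exI[of _ "a/2 + g/3"])
      using h 6 by (auto simp: bary_def ordc_def tchild_def piece_def P field_simps)
  qed
qed

lemma bary_unique:
  assumes "ND (x,y,z)" "bary (x,y,z) P a b c" "bary (x,y,z) P a' b' c'"
  shows "a = a' \<and> b = b' \<and> c = c'"
proof -
  have D: "cr (y - x) (z - x) \<noteq> 0" using assms(1) by (simp add: ND_def)
  have s: "a + b + c = 1" "a' + b' + c' = 1" using assms(2,3) by (auto simp: bary_def)
  have e: "of_real a * x + of_real b * y + of_real c * z = of_real a' * x + of_real b' * y + of_real c' * z"
    using assms(2,3) by (auto simp: bary_def)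
  have aa: "a = 1 - b - c" "a' = 1 - b' - c'" using s by auto
  have e2: "of_real (b - b') * (y - x) + of_real (c - c') * (z - x) = 0"
    using e unfolding aa by (simp add: algebra_simps)
  have r1: "(b - b') * Re (y - x) + (c - c') * Re (z - x) = 0"
    using arg_cong[OF e2, of Re] by simp
  have r2: "(b - b') * Im (y - x) + (c - c') * Im (z - x) = 0"
    using arg_cong[OF e2, of Im] by simp
  have "(b - b') * cr (y - x) (z - x) = 0"
  proof -
    have "(b - b') * cr (y - x) (z - x) = Im (z - x) * ((b - b') * Re (y - x) + (c - c') * Re (z - x)) - Re (z - x) * ((b - b') * Im (y - x) + (c - c') * Im (z - x))"
      by (simp add: cr_def algebra_simps)
    also have "\<dots> = 0" by (simp only: r1 r2 mult_zero_right diff_self)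
    finally show ?thesis .
  qed
  moreover have "(c - c') * cr (y - x) (z - x) = 0"
  proof -
    have "(c - c') * cr (y - x) (z - x) = Re (y - x) * ((b - b') * Im (y - x) + (c - c') * Im (z - x)) - Im (y - x) * ((b - b') * Re (y - x) + (c - c') * Re (z - x))"
      by (simp add: cr_def algebra_simps)
    also have "\<dots> = 0" by (simp only: r1 r2 mult_zero_right diff_self)
    finally show ?thesis .
  qed
  ultimately show ?thesis using D aa by auto
qed


lemma ND_T: "ND (Tcorners a)"
proof (induction a)
  case Nil
  show ?case by (simp add: ND_def cr_def tv0_def tv1_def tv2_def)
next
  case (Cons i a)
  then show ?case by (simp add: Tcorners_Cons ND_child)
qed

lemma insd_parent: "insd (tchild i t) P \<Longrightarrow> insd t P"
  using child_bary[of i "fst t" "fst (snd t)" "snd (snd t)" P]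
  by (auto simp: insd_bary)

lemma ordc_excl: "i < 6 \<Longrightarrow> i' < 6 \<Longrightarrow> i \<noteq> i' \<Longrightarrow> ordc i a b c \<Longrightarrow> ordc i' a b c \<Longrightarrow> False"
  by (auto simp: ordc_def split: if_splits)

lemma disj:
  "length a = length a' \<Longrightarrow> \<forall>k\<in>set a. k < 6 \<Longrightarrow> \<forall>k\<in>set a'. k < 6 \<Longrightarrow> a \<noteq> a' \<Longrightarrow>
   insd (Tcorners a) P \<Longrightarrow> insd (Tcorners a') P \<Longrightarrow> False"
proof (induction a arbitrary: a')
  case Nil
  then show ?case by simp
next
  case (Cons i a0)
  then obtain i' a0' where a': "a' = i' # a0'" by (cases a') auto
  show ?case
  proof (cases "a0 = a0'")
    case False
    show ?thesis
      apply (rule Cons.IH[of a0'])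
      using Cons.prems a' False by (auto simp: Tcorners_Cons intro: insd_parent)
  next
    case True
    with Cons.prems a' have ii: "i \<noteq> i'" "i < 6" "i' < 6" by auto
    obtain x y z where t: "Tcorners a0 = (x,y,z)" by (cases "Tcorners a0") auto
    have nd: "ND (x,y,z)" using ND_T[of a0] t by simp
    obtain a b c where 1: "bary (x,y,z) P a b c" "ordc i a b c"
      using child_bary[of i x y z P] Cons.prems t by (auto simp: Tcorners_Cons)
    obtain a2 b2 c2 where 2: "bary (x,y,z) P a2 b2 c2" "ordc i' a2 b2 c2"
      using child_bary[of i' x y z P] Cons.prems t a' True by (auto simp: Tcorners_Cons)
    have "a = a2 \<and> b = b2 \<and> c = c2" using bary_unique[OF nd 1(1) 2(1)] .
    then show ?thesis using ordc_excl[OF ii(2,3,1)] 1(2) 2(2) by auto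
  qed
qed


lemma cramer:
  assumes "cr a b \<noteq> 0"
  shows "c = of_real (cr c b / cr a b) * a + of_real (cr a c / cr a b) * b"
proof -
  have r: "Re c * cr a b = cr c b * Re a + cr a c * Re b" by (simp add: cr_def algebra_simps)
  have i: "Im c * cr a b = cr c b * Im a + cr a c * Im b" by (simp add: cr_def algebra_simps)
  have "Re c = (cr c b * Re a + cr a c * Re b) / cr a b" using r assms by (simp add: field_simps)
  moreover have "Im c = (cr c b * Im a + cr a c * Im b) / cr a b" using i assms by (simp add: field_simps)
  ultimately show ?thesis by (simp add: complex_eq_iff add_divide_distrib)
qed

lemma common_point:
  assumes D1: "cr (v - u) (w1 - u) \<noteq> 0" and D2: "cr (v - u) (w2 - u) \<noteq> 0"
    and same: "cr (v - u) (w1 - u) * cr (v - u) (w2 - u) > 0"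
  shows "\<exists>P. insd (u,v,w1) P \<and> insd (u,v,w2) P"
proof -
  define m where "m = (u + v) / 2"
  define d where "d = v - u"
  define e where "e = w2 - m"
  have ced: "cr e d = - cr (v - u) (w2 - u)"
    unfolding e_def d_def m_def by (simp add: cr_def field_simps)
  have c1d: "cr (w1 - m) d = - cr (v - u) (w1 - u)"
    unfolding d_def m_def by (simp add: cr_def field_simps)
  have ne: "cr e d \<noteq> 0" using ced D2 by simp
  define \<alpha> where "\<alpha> = cr (w1 - m) d / cr e d"
  define \<beta> where "\<beta> = cr e (w1 - m) / cr e d"
  have w1: "w1 - m = of_real \<alpha> * e + of_real \<beta> * d"
    unfolding \<alpha>_def \<beta>_def by (rule cramer[OF ne])
  have \<alpha>pos: "\<alpha> > 0"
    unfolding \<alpha>_def ced c1d using same by (simp add: divide_pos_neg zero_less_mult_iff zero_less_divide_iff)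
  define s where "s = 1 / (2 + 2 * \<alpha> + 4 * \<bar>\<beta>\<bar>)"
  have spos: "s > 0" using \<alpha>pos by (simp add: s_def add_pos_nonneg)
  have s1: "s * \<alpha> < 1/2"
  proof -
    have "s * \<alpha> = \<alpha> / (2 + 2 * \<alpha> + 4 * \<bar>\<beta>\<bar>)" by (simp add: s_def)
    also have "\<dots> < 1/2" using \<alpha>pos by (simp add: field_simps)
    finally show ?thesis .
  qed
  have s2: "s * \<bar>\<beta>\<bar> < 1/4"
  proof -
    have "s * \<bar>\<beta>\<bar> = \<bar>\<beta>\<bar> / (2 + 2 * \<alpha> + 4 * \<bar>\<beta>\<bar>)" by (simp add: s_def)
    also have "\<dots> < 1/4" using \<alpha>pos by (simp add: field_simps)
    finally show ?thesis .
  qed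
  have s3: "s < 1/2" using \<alpha>pos unfolding s_def by (simp add: field_simps)
  define P where "P = m + of_real s * (w1 - m)"
  have "insd (u,v,w1) P"
    unfolding insd_def prod.case
    apply (rule exI[of _ "(1 - s)/2"], rule exI[of _ "(1 - s)/2"], rule exI[of _ s])
    using spos s3 by (auto simp: P_def m_def field_simps)
  moreover have "insd (u,v,w2) P"
    unfolding insd_def prod.case
  proof (rule exI[of _ "(1 - s * \<alpha>)/2 - s * \<beta>"], rule exI[of _ "(1 - s * \<alpha>)/2 + s * \<beta>"], rule exI[of _ "s * \<alpha>"], intro conjI)
    have aux: "\<And>a b c. (a::real) < 1/2 \<Longrightarrow> c < 1/4 \<Longrightarrow> b \<le> c \<Longrightarrow> 0 < (1 - a)/2 - b" by (simp add: field_simps)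
    have b1: "s * \<beta> \<le> s * \<bar>\<beta>\<bar>" using spos by (intro mult_left_mono) auto
    have b2: "s * (- \<beta>) \<le> s * \<bar>\<beta>\<bar>" using spos by (intro mult_left_mono) auto
    show "0 < (1 - s * \<alpha>) / 2 - s * \<beta>" using aux[OF s1 s2 b1] .
    show "0 < (1 - s * \<alpha>) / 2 + s * \<beta>" using aux[OF s1 s2 b2] by simp
    show "0 < s * \<alpha>" using spos \<alpha>pos by simp
    show "(1 - s * \<alpha>) / 2 - s * \<beta> + ((1 - s * \<alpha>) / 2 + s * \<beta>) + s * \<alpha> = 1" by (simp add: field_simps)
    have "P = m + of_real s * (of_real \<alpha> * e + of_real \<beta> * d)" unfolding P_def w1 ..
    also have "\<dots> = complex_of_real ((1 - s * \<alpha>) / 2 - s * \<beta>) * u +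
        complex_of_real ((1 - s * \<alpha>) / 2 + s * \<beta>) * v + complex_of_real (s * \<alpha>) * w2"
      unfolding m_def e_def d_def by (simp add: field_simps)
    finally show "P = complex_of_real ((1 - s * \<alpha>) / 2 - s * \<beta>) * u +
        complex_of_real ((1 - s * \<alpha>) / 2 + s * \<beta>) * v + complex_of_real (s * \<alpha>) * w2" .
  qed
  ultimately show ?thesis by blast
qed


lemma insd_rot: "insd (x,y,z) P \<longleftrightarrow> insd (y,z,x) P"
  unfolding insd_def prod.case
  apply safe
   apply (rule_tac x=\<beta> in exI, rule_tac x=\<gamma> in exI, rule_tac x=\<alpha> in exI, simp add: algebra_simps)
  apply (rule_tac x=\<gamma> in exI, rule_tac x=\<alpha> in exI, rule_tac x=\<beta> in exI, simp add: algebra_simps)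
  done

lemma insd_swap: "insd (x,y,z) P \<longleftrightarrow> insd (y,x,z) P"
  unfolding insd_def prod.case
  apply safe
   apply (rule_tac x=\<beta> in exI, rule_tac x=\<alpha> in exI, rule_tac x=\<gamma> in exI, simp add: algebra_simps)
  apply (rule_tac x=\<beta> in exI, rule_tac x=\<alpha> in exI, rule_tac x=\<gamma> in exI, simp add: algebra_simps)
  done

lemma side_third:
  assumes "ND t" "j < 3" "side t j = (p, q)" "{p, q} = {u, v}"
  shows "\<exists>w. (\<forall>P. insd t P \<longleftrightarrow> insd (u,v,w) P) \<and> cr (v - u) (w - u) \<noteq> 0"
proof -
  obtain x y z where t: "t = (x,y,z)" by (cases t) auto
  have D: "cr (y - x) (z - x) \<noteq> 0" using assms(1) t by (simp add: ND_def)
  have D2: "cr (z - y) (x - y) \<noteq> 0" using D by (simp add: cr_def algebra_simps)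
  have D3: "cr (x - z) (y - z) \<noteq> 0" using D by (simp add: cr_def algebra_simps)
  have neg: "\<And>a b c. cr (b - a) (c - a) \<noteq> 0 \<Longrightarrow> cr (a - b) (c - b) \<noteq> 0"
    by (simp add: cr_def algebra_simps)
  have xy: "x \<noteq> y" "y \<noteq> z" "z \<noteq> x" using D by (auto simp: cr_def)
  have "\<exists>w. (\<forall>P. insd t P \<longleftrightarrow> insd (p,q,w) P) \<and> cr (q - p) (w - p) \<noteq> 0"
  proof -
    consider "j = 0" | "j = 1" | "j = 2" using assms(2) by linarith
    then show ?thesis
    proof cases
      case 1 then show ?thesis using assms(3) t D by (intro exI[of _ z]) (auto simp: side_def)
    next
      case 2 then show ?thesis using assms(3) t D2 insd_rot by (intro exI[of _ x]) (auto simp: side_def)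
    next
      case 3 then show ?thesis using assms(3) t D3 insd_rot by (intro exI[of _ y]) (auto simp: side_def)
    qed
  qed
  then obtain w where w: "\<forall>P. insd t P \<longleftrightarrow> insd (p,q,w) P" "cr (q - p) (w - p) \<noteq> 0" by blast
  have pq: "p \<noteq> q" using w(2) by (auto simp: cr_def)
  from assms(4) pq have "(p = u \<and> q = v) \<or> (p = v \<and> q = u)" by (auto simp: doubleton_eq_iff)
  then show ?thesis
  proof
    assume "p = u \<and> q = v" then show ?thesis using w by blast
  next
    assume h: "p = v \<and> q = u"
    have "cr (v - u) (w - u) = - cr (u - v) (w - v)" by (simp add: cr_def algebra_simps)
    then have c: "cr (v - u) (w - u) \<noteq> 0" using w(2) h by simp
    show ?thesis using w h c insd_swap by (intro exI[of _ w]) auto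
  qed
qed

lemma side_inj:
  assumes "ND t" "j < 3" "j' < 3" "side t j = (p, q)" "side t j' = (p', q')" "{p, q} = {p', q'}"
  shows "j = j'"
proof -
  obtain x y z where t: "t = (x,y,z)" by (cases t) auto
  have D: "cr (y - x) (z - x) \<noteq> 0" using assms(1) t by (simp add: ND_def)
  have xy: "x \<noteq> y" "y \<noteq> z" "z \<noteq> x" using D by (auto simp: cr_def)
  show ?thesis using assms(2-6) t xy
    by (auto simp: side_def doubleton_eq_iff split: if_splits)
qed


definition fT :: "nat list \<times> nat \<Rightarrow> complex set" where
  "fT e = (case side (Tcorners (fst e)) (snd e) of (u, v) \<Rightarrow> {u, v})"

lemma fiber_le2: "card {e \<in> SE n. fT e = b} \<le> 2"
proof (rule ccontr)
  define F where "F = {e \<in> SE n. fT e = b}"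
  assume "\<not> card {e \<in> SE n. fT e = b} \<le> 2"
  then have "Suc (Suc (Suc 0)) \<le> card F" unfolding F_def by simp
  then obtain e1 B1 where 1: "F = insert e1 B1" "e1 \<notin> B1" "Suc (Suc 0) \<le> card B1"
    using card_le_Suc_iff[THEN iffD1] by blast
  obtain e2 B2 where 2: "B1 = insert e2 B2" "e2 \<notin> B2" "Suc 0 \<le> card B2"
    using card_le_Suc_iff[THEN iffD1, OF 1(3)] by blast
  obtain e3 B3 where 3: "B2 = insert e3 B3" "e3 \<notin> B3"
    using card_le_Suc_iff[THEN iffD1, OF 2(3)] by blast
  have e: "e1 \<in> F" "e2 \<in> F" "e3 \<in> F" "e1 \<noteq> e2" "e1 \<noteq> e3" "e2 \<noteq> e3"
    using 1 2 3 by blast+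
  obtain u v where uv: "side (Tcorners (fst e1)) (snd e1) = (u, v)" by (cases "side (Tcorners (fst e1)) (snd e1)") auto
  have b: "b = {u, v}" using e(1) uv by (auto simp: F_def fT_def)
  have third: "\<exists>w. (\<forall>P. insd (Tcorners (fst e)) P \<longleftrightarrow> insd (u,v,w) P) \<and> cr (v - u) (w - u) \<noteq> 0"
    if eF: "e \<in> F" for e
  proof -
    obtain p q where pq: "side (Tcorners (fst e)) (snd e) = (p, q)" by (cases "side (Tcorners (fst e)) (snd e)") auto
    have "{p, q} = {u, v}" using eF pq b by (auto simp: F_def fT_def)
    moreover have "snd e < 3" using eF by (auto simp: F_def SE_def)
    ultimately show ?thesis using side_third[OF ND_T _ pq] by blast
  qed
  have dfst: "fst e \<noteq> fst e'" if ee: "e \<in> F" "e' \<in> F" "e \<noteq> e'" for e e'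
  proof
    assume h: "fst e = fst e'"
    obtain p q where pq: "side (Tcorners (fst e)) (snd e) = (p, q)" by (cases "side (Tcorners (fst e)) (snd e)") auto
    obtain p' q' where pq': "side (Tcorners (fst e)) (snd e') = (p', q')" by (cases "side (Tcorners (fst e)) (snd e')") auto
    have "{p, q} = b" using ee(1) pq by (auto simp: F_def fT_def)
    moreover have "{p', q'} = b" using ee(2) pq' h by (auto simp: F_def fT_def)
    moreover have "snd e < 3" "snd e' < 3" using ee by (auto simp: F_def SE_def)
    ultimately have "snd e = snd e'" using side_inj[OF ND_T _ _ pq pq'] by blast
    with h ee(3) show False by (simp add: prod_eq_iff)
  qed
  have addr: "fst e \<in> addrs n" if "e \<in> F" for e using that by (auto simp: F_def SE_def)
  have key: False if kk: "e \<in> F" "e' \<in> F" "e \<noteq> e'"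
      "\<forall>P. insd (Tcorners (fst e)) P \<longleftrightarrow> insd (u,v,w) P" "\<forall>P. insd (Tcorners (fst e')) P \<longleftrightarrow> insd (u,v,w') P"
      "cr (v - u) (w - u) \<noteq> 0" "cr (v - u) (w' - u) \<noteq> 0" "cr (v - u) (w - u) * cr (v - u) (w' - u) > 0" for e e' w w'
  proof -
    obtain P where P: "insd (u,v,w) P" "insd (u,v,w') P" using common_point[OF kk(6-8)] by blast
    show False
      apply (rule disj[of "fst e" "fst e'" P])
      using addr[OF kk(1)] addr[OF kk(2)] dfst[OF kk(1-3)] P kk(4,5) by (auto simp: addrs_def)
  qed
  obtain w1 where w1: "\<forall>P. insd (Tcorners (fst e1)) P \<longleftrightarrow> insd (u,v,w1) P" "cr (v - u) (w1 - u) \<noteq> 0" using third[OF e(1)] by blast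
  obtain w2 where w2: "\<forall>P. insd (Tcorners (fst e2)) P \<longleftrightarrow> insd (u,v,w2) P" "cr (v - u) (w2 - u) \<noteq> 0" using third[OF e(2)] by blast
  obtain w3 where w3: "\<forall>P. insd (Tcorners (fst e3)) P \<longleftrightarrow> insd (u,v,w3) P" "cr (v - u) (w3 - u) \<noteq> 0" using third[OF e(3)] by blast
  have pig: "\<And>a b c::real. a \<noteq> 0 \<Longrightarrow> b \<noteq> 0 \<Longrightarrow> c \<noteq> 0 \<Longrightarrow> a * b > 0 \<or> a * c > 0 \<or> b * c > 0"
    by (auto simp: zero_less_mult_iff)
  from pig[OF w1(2) w2(2) w3(2)] show False
  proof (elim disjE)
    assume "cr (v - u) (w1 - u) * cr (v - u) (w2 - u) > 0"
    then show False using key[OF e(1) e(2) e(4) w1(1) w2(1) w1(2) w2(2)] by blast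
  next
    assume "cr (v - u) (w1 - u) * cr (v - u) (w3 - u) > 0"
    then show False using key[OF e(1) e(3) e(5) w1(1) w3(1) w1(2) w3(2)] by blast
  next
    assume "cr (v - u) (w2 - u) * cr (v - u) (w3 - u) > 0"
    then show False using key[OF e(2) e(3) e(6) w2(1) w3(1) w2(2) w3(2)] by blast
  qed
qed




lemma coupling_le:
  assumes "map_pmf fst J = M" "map_pmf snd J = N" "\<And>x y. (x, y) \<in> set_pmf J \<Longrightarrow> x \<in> U \<Longrightarrow> y \<in> V"
  shows "measure_pmf.prob M U \<le> measure_pmf.prob N V"
proof -
  have "measure_pmf.prob M U = measure_pmf.prob J (fst -` U)" using assms(1) by auto
  also have "\<dots> \<le> measure_pmf.prob J (snd -` V)"
    by (rule measure_pmf.finite_measure_mono_AE) (auto simp: AE_measure_pmf_iff dest: assms(3))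
  also have "\<dots> = measure_pmf.prob N V" using assms(2) by auto
  finally show ?thesis .
qed

lemma bool_pmf_eqI: "pmf M True = pmf N True \<Longrightarrow> M = (N :: bool pmf)"
  by (rule pmf_eqI) (metis (full_types) pmf_False_conv_True)

lemma or_bernoulli:
  assumes "0 \<le> p" "p \<le> 1" "0 \<le> r" "r \<le> 1"
  shows "do {y \<leftarrow> bernoulli_pmf p; z \<leftarrow> bernoulli_pmf r; return_pmf (y \<or> z)} = bernoulli_pmf (p + (1 - p) * r)"
proof (rule bool_pmf_eqI)
  have h: "0 \<le> p + (1 - p) * r" "p + (1 - p) * r \<le> 1"
    using assms by (auto intro: add_nonneg_nonneg mult_nonneg_nonneg)
      (smt (verit) mult_left_le mult_nonneg_nonneg)
  show "pmf (do {y \<leftarrow> bernoulli_pmf p; z \<leftarrow> bernoulli_pmf r; return_pmf (y \<or> z)}) True =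
        pmf (bernoulli_pmf (p + (1 - p) * r)) True"
    using assms h by (simp add: pmf_bind)
qed

lemma exists_bernoulli:
  assumes "finite A" "0 \<le> p" "p \<le> 1"
  shows "map_pmf (\<lambda>\<omega>. \<exists>a\<in>A. \<omega> a) (Pi_pmf A False (\<lambda>_. bernoulli_pmf p)) = bernoulli_pmf (1 - (1 - p) ^ card A)"
  using assms(1)
proof (induction rule: finite_induct)
  case empty
  show ?case by (rule bool_pmf_eqI) simp
next
  case (insert x A)
  define r where "r = 1 - (1 - p) ^ card A"
  have r: "0 \<le> r" "r \<le> 1" using assms unfolding r_def by (auto simp: power_le_one)
  have "map_pmf (\<lambda>\<omega>. \<exists>a\<in>insert x A. \<omega> a) (Pi_pmf (insert x A) False (\<lambda>_. bernoulli_pmf p))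
      = do {y \<leftarrow> bernoulli_pmf p; f \<leftarrow> Pi_pmf A False (\<lambda>_. bernoulli_pmf p); return_pmf (y \<or> (\<exists>a\<in>A. f a))}"
    using insert.hyps
    by (simp add: Pi_pmf_insert' map_bind_pmf cong: bind_pmf_cong) (intro bind_pmf_cong refl, auto)
  also have "\<dots> = do {y \<leftarrow> bernoulli_pmf p; z \<leftarrow> map_pmf (\<lambda>\<omega>. \<exists>a\<in>A. \<omega> a) (Pi_pmf A False (\<lambda>_. bernoulli_pmf p)); return_pmf (y \<or> z)}"
    by (simp add: bind_map_pmf)
  also have "\<dots> = do {y \<leftarrow> bernoulli_pmf p; z \<leftarrow> bernoulli_pmf r; return_pmf (y \<or> z)}"
    using insert.IH r_def by simp
  also have "\<dots> = bernoulli_pmf (p + (1 - p) * r)" using or_bernoulli[OF assms(2,3) r] .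
  also have "p + (1 - p) * r = 1 - (1 - p) ^ card (insert x A)"
    using insert.hyps by (simp add: r_def algebra_simps)
  finally show ?case .
qed


lemma or_map:
  assumes "finite B" "finite A" "f ` A \<subseteq> B" "0 \<le> p" "p \<le> 1"
  shows "map_pmf (\<lambda>\<omega> b. \<exists>a\<in>A. f a = b \<and> \<omega> a) (Pi_pmf A False (\<lambda>_. bernoulli_pmf p)) =
         Pi_pmf B False (\<lambda>b. bernoulli_pmf (1 - (1 - p) ^ card {a\<in>A. f a = b}))"
  using assms(1,2,3)
proof (induction B arbitrary: A rule: finite_induct)
  case empty
  then have "A = {}" by auto
  then show ?case by (simp add: fun_eq_iff)
next
  case (insert b B)
  define A1 where "A1 = {a\<in>A. f a = b}"
  define A2 where "A2 = {a\<in>A. f a \<noteq> b}"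
  have fin: "finite A1" "finite A2" using insert.prems by (auto simp: A1_def A2_def)
  have AU: "A = A1 \<union> A2" "A1 \<inter> A2 = {}" by (auto simp: A1_def A2_def)
  have fA2: "f ` A2 \<subseteq> B" using insert.prems by (auto simp: A2_def)
  let ?M1 = "Pi_pmf A1 False (\<lambda>_. bernoulli_pmf p)"
  let ?M2 = "Pi_pmf A2 False (\<lambda>_. bernoulli_pmf p)"
  let ?OR2 = "\<lambda>h b'. \<exists>a\<in>A2. f a = b' \<and> h a"
  let ?EX1 = "\<lambda>g. \<exists>a\<in>A1. g a"
  have "Pi_pmf A False (\<lambda>_. bernoulli_pmf p) = map_pmf (\<lambda>(g,h) x. if x \<in> A1 then g x else h x) (pair_pmf ?M1 ?M2)"
    unfolding AU(1) by (rule Pi_pmf_union[OF fin AU(2)])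
  then have "map_pmf (\<lambda>\<omega> b. \<exists>a\<in>A. f a = b \<and> \<omega> a) (Pi_pmf A False (\<lambda>_. bernoulli_pmf p))
      = map_pmf (\<lambda>(y,k). k(b := y)) (map_pmf (\<lambda>(g,h). (?EX1 g, ?OR2 h)) (pair_pmf ?M1 ?M2))"
    by (simp add: pmf.map_comp o_def case_prod_unfold)
       (intro map_pmf_cong refl, auto simp: fun_eq_iff A1_def A2_def)
  also have "\<dots> = map_pmf (\<lambda>(y,k). k(b := y)) (pair_pmf (map_pmf ?EX1 ?M1) (map_pmf ?OR2 ?M2))"
    by (simp only: map_pair)
  also have "map_pmf ?EX1 ?M1 = bernoulli_pmf (1 - (1 - p) ^ card A1)"
    by (rule exists_bernoulli[OF fin(1) assms(4,5)])
  also have "map_pmf ?OR2 ?M2 = Pi_pmf B False (\<lambda>b. bernoulli_pmf (1 - (1 - p) ^ card {a\<in>A2. f a = b}))"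
    by (rule insert.IH[OF fin(2) fA2])
  also have "\<dots> = Pi_pmf B False (\<lambda>b. bernoulli_pmf (1 - (1 - p) ^ card {a\<in>A. f a = b}))"
  proof (intro Pi_pmf_cong refl)
    fix x assume "x \<in> B"
    then have "{a\<in>A2. f a = x} = {a\<in>A. f a = x}" using insert.hyps by (auto simp: A2_def)
    then show "bernoulli_pmf (1 - (1 - p) ^ card {a\<in>A2. f a = x}) = bernoulli_pmf (1 - (1 - p) ^ card {a\<in>A. f a = x})"
      by simp
  qed
  also have "map_pmf (\<lambda>(y,k). k(b := y)) (pair_pmf (bernoulli_pmf (1 - (1 - p) ^ card A1))
      (Pi_pmf B False (\<lambda>b. bernoulli_pmf (1 - (1 - p) ^ card {a\<in>A. f a = b})))) =
      Pi_pmf (insert b B) False (\<lambda>b. bernoulli_pmf (1 - (1 - p) ^ card {a\<in>A. f a = b}))"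
    by (subst Pi_pmf_insert[OF insert.hyps]) (simp add: A1_def)
  finally show ?case .
qed


lemma perc_mono:
  assumes B: "finite B" and r: "\<And>b. b \<in> B \<Longrightarrow> 0 \<le> r b \<and> r b \<le> q" and q: "q \<le> 1"
    and up: "\<And>\<eta> \<eta>'. \<eta> \<in> U \<Longrightarrow> (\<forall>b. \<eta> b \<longrightarrow> \<eta>' b) \<Longrightarrow> \<eta>' \<in> U"
  shows "measure_pmf.prob (Pi_pmf B False (\<lambda>b. bernoulli_pmf (r b))) U \<le>
         measure_pmf.prob (Pi_pmf B False (\<lambda>_. bernoulli_pmf q)) U"
proof (cases "q > 0")
  case False
  have rq: "r b = q" if "b \<in> B" for b using r[OF that] False by linarith
  then have "Pi_pmf B False (\<lambda>b. bernoulli_pmf (r b)) = Pi_pmf B False (\<lambda>_. bernoulli_pmf q)"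
    by (intro Pi_pmf_cong) auto
  then show ?thesis by simp
next
  case True
  define K where "K = (\<lambda>b x. if x then bernoulli_pmf (r b / q) else return_pmf False)"
  have Kb: "bernoulli_pmf (r b) = bind_pmf (bernoulli_pmf q) (K b)" if "b \<in> B" for b
  proof (rule bool_pmf_eqI)
    have "0 \<le> r b / q" "r b / q \<le> 1" using r[OF that] True by auto
    then show "pmf (bernoulli_pmf (r b)) True = pmf (bind_pmf (bernoulli_pmf q) (K b)) True"
      using r[OF that] True q by (simp add: pmf_bind K_def)
  qed
  define M where "M = Pi_pmf B False (\<lambda>_. bernoulli_pmf q)"
  define N where "N = (\<lambda>\<eta>. Pi_pmf B False (\<lambda>b. K b (\<eta> b)))"
  have eq: "Pi_pmf B False (\<lambda>b. bernoulli_pmf (r b)) = bind_pmf M N"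
  proof -
    have "Pi_pmf B False (\<lambda>b. bernoulli_pmf (r b)) = Pi_pmf B False (\<lambda>b. bind_pmf (bernoulli_pmf q) (K b))"
      by (intro Pi_pmf_cong) (auto simp: Kb)
    also have "\<dots> = bind_pmf M N" unfolding M_def N_def by (rule Pi_pmf_bind[OF B])
    finally show ?thesis .
  qed
  define J where "J = bind_pmf M (\<lambda>\<eta>. map_pmf (\<lambda>\<zeta>. (\<zeta>, \<eta>)) (N \<eta>))"
  show ?thesis
    unfolding eq M_def[symmetric]
  proof (rule coupling_le[of J])
    show "map_pmf fst J = bind_pmf M N" by (simp add: J_def map_bind_pmf pmf.map_comp o_def)
    have "map_pmf snd J = bind_pmf M (\<lambda>\<eta>. map_pmf (\<lambda>_. \<eta>) (N \<eta>))"
      by (simp add: J_def map_bind_pmf pmf.map_comp o_def)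
    also have "\<dots> = bind_pmf M return_pmf" by (simp add: map_pmf_const)
    finally show "map_pmf snd J = M" by (simp add: bind_return_pmf')
    fix \<zeta> \<eta> assume zj: "(\<zeta>, \<eta>) \<in> set_pmf J" and zu: "\<zeta> \<in> U"
    from zj have zN: "\<zeta> \<in> set_pmf (N \<eta>)" unfolding J_def by (auto simp add: set_bind_pmf)
    have "\<forall>b. \<zeta> b \<longrightarrow> \<eta> b"
    proof (intro allI impI)
      fix b assume zb: "\<zeta> b"
      have "\<zeta> \<in> PiE_dflt B False (set_pmf \<circ> (\<lambda>b. K b (\<eta> b)))"
        using zN unfolding N_def set_Pi_pmf[OF B] .
      then have pe: "\<forall>x. (x \<in> B \<longrightarrow> \<zeta> x \<in> set_pmf (K x (\<eta> x))) \<and> (x \<notin> B \<longrightarrow> \<zeta> x = False)"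
        unfolding PiE_dflt_def by simp
      have "b \<in> B" using pe zb by blast
      then have "\<zeta> b \<in> set_pmf (K b (\<eta> b))" using pe by blast
      then show "\<eta> b" using zb unfolding K_def by (cases "\<eta> b") simp_all
    qed
    then show "\<eta> \<in> U" using up[OF zu] by blast
  qed
qed




definition map3 :: "('a \<Rightarrow> 'b) \<Rightarrow> 'a \<times> 'a \<times> 'a \<Rightarrow> 'b \<times> 'b \<times> 'b" where
  "map3 g t = (case t of (x, y, z) \<Rightarrow> (g x, g y, g z))"

definition proj :: "svert \<Rightarrow> complex" where
  "proj v = (case Tcorners (fst v) of (x, y, z) \<Rightarrow>
     (let k = snd v in if k = 0 then x else if k = 1 then y else if k = 2 then z
      else if k = 3 then (x + y) / 2 else if k = 4 then (y + z) / 2 else if k = 5 then (z + x) / 2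
      else (x + y + z) / 3))"

lemma map3_piece: "map3 g (piece i x y z m1 m2 m3 c) = piece i (g x) (g y) (g z) (g m1) (g m2) (g m3) (g c)"
  by (simp add: map3_def piece_def)

lemma proj_Scorners: "map3 proj (Scorners a) = Tcorners a"
proof (induction a)
  case Nil
  show ?case by (simp add: map3_def proj_def)
next
  case (Cons i a)
  obtain X Y Z where S: "Scorners a = (X, Y, Z)" by (cases "Scorners a") auto
  obtain x y z where T: "Tcorners a = (x, y, z)" by (cases "Tcorners a") auto
  have h: "proj X = x" "proj Y = y" "proj Z = z" using Cons.IH S T by (auto simp: map3_def)
  show ?case
    using h S T by (simp add: map3_piece Tcorners_Cons tchild_def proj_def Let_def)
qed

lemma side_map3: "side (map3 g t) j = (case side t j of (u, v) \<Rightarrow> (g u, g v))"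
  by (cases t) (simp add: map3_def side_def)

lemma sides_side: "sides t = side t ` {0, 1, 2}"
  by (cases t) (auto simp: sides_def side_def)

lemma TE_fT: "TE n = fT ` SE n"
proof
  show "TE n \<subseteq> fT ` SE n"
  proof
    fix E assume "E \<in> TE n"
    then obtain u v a where h: "E = {u, v}" "a \<in> addrs n" "(u, v) \<in> sides (Tcorners a)"
      by (auto simp: TE_def)
    then obtain j where j: "j \<in> {0, 1, 2::nat}" "side (Tcorners a) j = (u, v)"
      using h(3) unfolding sides_side image_iff by metis
    then have "fT (a, j) = E" using h by (simp add: fT_def)
    moreover have "(a, j) \<in> SE n" using h j by (simp add: SE_def)
    ultimately show "E \<in> fT ` SE n" by (metis image_eqI)
  qed
next
  show "fT ` SE n \<subseteq> TE n"
  proof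
    fix E assume "E \<in> fT ` SE n"
    then obtain a j where h: "a \<in> addrs n" "j \<in> {0, 1, 2}" "E = fT (a, j)" by (auto simp: SE_def)
    obtain u v where uv: "side (Tcorners a) j = (u, v)" by (cases "side (Tcorners a) j") auto
    have "(u, v) \<in> sides (Tcorners a)" using h(2) uv by (auto simp: sides_side image_iff)
    then show "E \<in> TE n" using h uv unfolding TE_def fT_def by auto
  qed
qed

lemma finite_addrs: "finite (addrs n)"
proof -
  have "addrs n = {xs. set xs \<subseteq> {..<6} \<and> length xs = n}" by (auto simp: addrs_def)
  then show ?thesis by (simp add: finite_lists_length_eq)
qed

lemma finite_SE: "finite (SE n)" by (simp add: SE_def finite_addrs)

lemma finite_TE: "finite (TE n)" by (simp add: TE_fT finite_SE)

definition ORc :: "nat \<Rightarrow> (nat list \<times> nat \<Rightarrow> bool) \<Rightarrow> complex set \<Rightarrow> bool" where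
  "ORc n \<omega> b = (\<exists>e\<in>SE n. fT e = b \<and> \<omega> e)"

lemma path_map:
  assumes "(x, y) \<in> {(u, v). \<exists>e\<in>SE n. \<omega> e \<and> (Sends e = (u, v) \<or> Sends e = (v, u))}\<^sup>*"
  shows "(proj x, proj y) \<in> {(u, v). {u, v} \<in> TE n \<and> ORc n \<omega> {u, v}}\<^sup>*"
  using assms
proof (induction rule: rtrancl_induct)
  case base
  then show ?case by simp
next
  case (step y z)
  then obtain e where e: "e \<in> SE n" "\<omega> e" "Sends e = (y, z) \<or> Sends e = (z, y)" by auto
  have "Sends e = side (Scorners (fst e)) (snd e)" by (simp add: Sends_def)
  then have "side (Tcorners (fst e)) (snd e) = (case Sends e of (u, v) \<Rightarrow> (proj u, proj v))"
    by (metis proj_Scorners side_map3)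
  then have fe: "fT e = {proj y, proj z}" using e(3) by (auto simp: fT_def)
  have "{proj y, proj z} \<in> TE n" using e(1) fe by (auto simp: TE_fT)
  moreover have "ORc n \<omega> {proj y, proj z}" using e fe by (auto simp: ORc_def)
  ultimately show ?case using step.IH by (simp add: rtrancl.rtrancl_into_rtrancl)
qed




lemma S_le_T:
  assumes p: "0 \<le> p" "p \<le> 1"
  shows "S_cross n (p / 2) \<le> T_cross n p"
proof -
  define ET where "ET = {\<eta>. (tv0, tv1) \<in> {(u, v). {u, v} \<in> TE n \<and> \<eta> {u, v}}\<^sup>*}"
  define r where "r = (\<lambda>b. 1 - (1 - p / 2) ^ card {e \<in> SE n. fT e = b})"
  have pr0: "proj ([], 0) = tv0" "proj ([], 1) = tv1" by (simp_all add: proj_def)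
  have "S_cross n (p / 2) \<le> measure_pmf.prob (perc (SE n) (p / 2)) {\<omega>. ORc n \<omega> \<in> ET}"
    unfolding S_cross_def
  proof (rule measure_pmf.finite_measure_mono)
    show "{\<omega>. (([], 0), [], 1) \<in> {(u, v). \<exists>e\<in>SE n. \<omega> e \<and> (Sends e = (u, v) \<or> Sends e = (v, u))}\<^sup>*}
        \<subseteq> {\<omega>. ORc n \<omega> \<in> ET}"
      using path_map pr0 unfolding ET_def by fastforce
  qed simp
  also have "\<dots> = measure_pmf.prob (map_pmf (ORc n) (perc (SE n) (p / 2))) ET"
    by (simp add: vimage_def)
  also have "map_pmf (ORc n) (perc (SE n) (p / 2)) = Pi_pmf (TE n) False (\<lambda>b. bernoulli_pmf (r b))"
  proof -
    have "ORc n = (\<lambda>\<omega> b. \<exists>a\<in>SE n. fT a = b \<and> \<omega> a)" by (simp add: fun_eq_iff ORc_def)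
    then show ?thesis unfolding perc_def r_def
      using or_map[where f = fT and p = "p / 2", OF finite_TE finite_SE] p by (simp add: TE_fT)
  qed
  also have "measure_pmf.prob (Pi_pmf (TE n) False (\<lambda>b. bernoulli_pmf (r b))) ET \<le>
      measure_pmf.prob (Pi_pmf (TE n) False (\<lambda>_. bernoulli_pmf p)) ET"
  proof (rule perc_mono[OF finite_TE _ p(2)])
    fix b
    have q: "0 \<le> 1 - p / 2" "1 - p / 2 \<le> 1" using p by auto
    have "(1 - p / 2) ^ 2 \<le> (1 - p / 2) ^ card {e \<in> SE n. fT e = b}"
      using q fiber_le2[of n b] by (intro power_decreasing) auto
    moreover have "(1 - p / 2) ^ card {e \<in> SE n. fT e = b} \<le> 1" using q by (simp add: power_le_one)
    moreover have "1 - (1 - p / 2) ^ 2 \<le> p" using p by (simp add: power2_eq_square field_simps)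
    ultimately show "0 \<le> r b \<and> r b \<le> p" unfolding r_def by linarith
  next
    fix \<eta> \<eta>' :: "complex set \<Rightarrow> bool"
    assume "\<eta> \<in> ET" "\<forall>b. \<eta> b \<longrightarrow> \<eta>' b"
    then show "\<eta>' \<in> ET" unfolding ET_def by (auto elim!: rtrancl_mono[THEN subsetD, rotated])
  qed
  also have "\<dots> = T_cross n p" by (simp add: T_cross_def perc_def ET_def)
  finally show ?thesis .
qed

lemma T_cross_0: "T_cross n 0 = 0"
proof -
  have "perc (TE n) 0 = Pi_pmf (TE n) False (\<lambda>_. return_pmf False)"
    unfolding perc_def by (intro Pi_pmf_cong refl) (rule bool_pmf_eqI, simp)
  also have "\<dots> = return_pmf (\<lambda>_. False)" by (simp add: finite_TE)
  finally have e: "perc (TE n) 0 = return_pmf (\<lambda>_. False)" .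
  have "tv0 \<noteq> tv1" by (simp add: tv0_def tv1_def)
  then show ?thesis unfolding T_cross_def e by (simp add: measure_pmf_zero_iff)
qed

theorem corollary4p10:
  shows "p_S \<ge> p_T / 2"
proof -
  define XT where "XT = {p \<in> {0..1}. (\<lambda>n. T_cross n p) \<longlonglongrightarrow> 0}"
  define XS where "XS = {p \<in> {0..1}. (\<lambda>n. S_cross n p) \<longlonglongrightarrow> 0}"
  have ne: "XT \<noteq> {}" using T_cross_0 unfolding XT_def by (intro exI[of _ 0] ex_in_conv[THEN iffD1]) auto
  have bdd: "bdd_above XS" unfolding XS_def by (intro bdd_aboveI[of _ 1]) auto
  have half: "p / 2 \<in> XS" if "p \<in> XT" for p
  proof -
    have p: "0 \<le> p" "p \<le> 1" and T: "(\<lambda>n. T_cross n p) \<longlonglongrightarrow> 0" using that by (auto simp: XT_def)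
    have "(\<lambda>n. S_cross n (p / 2)) \<longlonglongrightarrow> 0"
    proof (rule Lim_null_comparison[OF _ T])
      show "\<forall>\<^sub>F n in sequentially. norm (S_cross n (p / 2)) \<le> T_cross n p"
        using S_le_T[OF p] by (simp add: S_cross_def)
    qed
    then show ?thesis using p by (simp add: XS_def)
  qed
  have "Sup XT \<le> 2 * Sup XS"
  proof (rule cSup_least[OF ne])
    fix p assume "p \<in> XT"
    then have "p / 2 \<le> Sup XS" using half cSup_upper[OF _ bdd] by blast
    then show "p \<le> 2 * Sup XS" by simp
  qed
  then show ?thesis unfolding p_S_def p_T_def XT_def[symmetric] XS_def[symmetric] by simp
qed


end
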